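(* Let $\tilde{\mathbf{M}}$ be a real $n\times n$ skew-symmetric matrix and let $\mathbf{L}$ be a symmetric $n\times n$ matrix with entries in $\{0,1\}$ and all diagonal entries equal to $1$. Let $\tilde{\mathbf{M}}_{\mathbf{L}}=\mathbf{L}\circ\tilde{\mathbf{M}}$, let $\mathbf{D}_{\beta}=\mathbf{I}\circ(\mathbf{L}\mathbf{L}^\top)$ (the diagonal matrix whose $i$-th diagonal entry $\beta_i=n-\bar\beta_i$ is the number of indices $j$ with $L_{ij}=1$, $\bar\beta_i$ being the number of $j$ with $L_{ij}=0$), and let $\bar{\mathbf{L}}=\mathds{1}-\mathbf{L}$. Assume $\mathbf{D}_{\beta}+\bar{\mathbf{L}}$ is invertible. Then the problem $\min_{\mathbf{M}\in\mathcal{M}_T(n)}\|\mathbf{L}\circ(\tilde{\mathbf{M}}-\mathbf{M})\|_F^2$ has the closed-form solution $\mathbf{M}^\ast=(\mathbf{D}_{\beta}+\bar{\mathbf{L}})^{-1}\tilde{\mathbf{M}}_{\mathbf{L}}\mathds{1}+\mathds{1}\tilde{\mathbf{M}}_{\mathbf{L}}(\mathbf{D}_{\beta}+\bar{\mathbf{L}})^{-1}$.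
   Context: $\circ$ denotes the Hadamard (entrywise) product; $\mathds{1}$ is the $n\times n$ all-ones matrix; $\mathbf{I}$ is the identity; $\|\cdot\|_F$ is the Frobenius norm. A TDOA matrix is an $n\times n$ real matrix whose $(i,j)$ entry is $\tau_i-\tau_j$ for some $(\tau_1,\dots,\tau_n)\in\mathbb{R}^n$; $\mathcal{M}_T(n)$ is the set of all $n\times n$ TDOA matrices. The matrix $\mathbf{L}$ encodes which measurements are available: $L_{ij}=1$ if the TDOA between sensors $i$ and $j$ is known, $0$ otherwise. $\tilde{\mathbf{M}}$ is a noisy measured TDOA matrix (skew-symmetric). *)

theory Defs
  imports "HOL-Analysis.Analysis"
begin

definition hadamard :: "real^'n^'n \<Rightarrow> real^'n^'n \<Rightarrow> real^'n^'n" (infixl "\<circ>\<^sub>H" 70) where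
  "hadamard A B = (\<chi> i j. A $ i $ j * B $ i $ j)"

definition ones_mat :: "real^'n^'n" where
  "ones_mat = (\<chi> i j. 1)"

definition frob_norm :: "real^'n^'n \<Rightarrow> real" where
  "frob_norm A = sqrt (\<Sum>i\<in>UNIV. \<Sum>j\<in>UNIV. (A $ i $ j)\<^sup>2)"

definition tdoa_matrices :: "(real^'n^'n) set" where
  "tdoa_matrices = {M. \<exists>\<tau>::real^'n. \<forall>i j. M $ i $ j = \<tau> $ i - \<tau> $ j}"

end

theory Submission
  imports Defs
begin

theorem theorem4:
  fixes Mt L :: "real^'n^'n"
  assumes skew: "transpose Mt = - Mt"
    and L_sym: "transpose L = L"
    and L_01: "\<forall>i j. L $ i $ j = 0 \<or> L $ i $ j = 1"
    and L_diag: "\<forall>i. L $ i $ i = 1"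
    and inv: "invertible (hadamard (mat 1) (L ** transpose L) + (ones_mat - L))"
  shows "let Mw = hadamard L Mt;
             A = matrix_inv (hadamard (mat 1) (L ** transpose L) + (ones_mat - L));
             Mstar = A ** Mw ** ones_mat + ones_mat ** Mw ** A
         in Mstar \<in> tdoa_matrices \<and>
            (\<forall>M \<in> tdoa_matrices.
               (frob_norm (hadamard L (Mt - Mstar)))\<^sup>2 \<le> (frob_norm (hadamard L (Mt - M)))\<^sup>2)"
proof -
  define B where "B = hadamard (mat 1) (L ** transpose L) + (ones_mat - L)"
  define A where "A = matrix_inv B"
  define Mw where "Mw = hadamard L Mt"
  define Mstar where "Mstar = A ** Mw ** ones_mat + ones_mat ** Mw ** A"
  have BA: "B ** A = mat 1" and AB: "A ** B = mat 1"
    using someI_ex[OF inv[folded B_def, unfolded invertible_def]]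
    unfolding A_def matrix_inv_def by auto
  have sk: "Mt$j$i = - Mt$i$j" for i j
    using arg_cong[OF skew, of "\<lambda>X. X$i$j"] by (simp add: transpose_def)
  have ls: "L$j$i = L$i$j" for i j
    using arg_cong[OF L_sym, of "\<lambda>X. X$i$j"] by (simp add: transpose_def)
  have l2: "L$i$j * L$i$j = L$i$j" for i j
    using L_01 by (metis mult_1 mult_zero_left)
  have Bij: "B$i$j = (if i = j then (\<Sum>k\<in>UNIV. L$i$k) else 0) + 1 - L$i$j" for i j
    by (simp add: B_def hadamard_def mat_def ones_mat_def matrix_matrix_mult_def transpose_def l2)
  have Bsym: "transpose B = B"
    by (simp add: vec_eq_iff transpose_def Bij ls)
  have Asym: "transpose A = A"
  proof -
    have "transpose A ** B = mat 1"
      using arg_cong[OF BA, of transpose] by (simp add: matrix_transpose_mul Bsym)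
    have "transpose A = transpose A ** (B ** A)" using BA by simp
    also have "\<dots> = (transpose A ** B) ** A" by (simp add: matrix_mul_assoc)
    finally have "transpose A = (transpose A ** B) ** A" .
    thus ?thesis using \<open>transpose A ** B = mat 1\<close> by simp
  qed
  have As: "A$j$i = A$i$j" for i j
    using arg_cong[OF Asym, of "\<lambda>X. X$i$j"] by (simp add: transpose_def)
  define cv :: "real^'n" where "cv = (\<chi> l. \<Sum>k\<in>UNIV. L$l$k * Mt$l$k)"
  define \<tau> where "\<tau> = A *v cv"
  have Bt: "B *v \<tau> = cv"
    unfolding \<tau>_def by (simp add: matrix_vector_mul_assoc BA)
  have csum: "(\<Sum>i\<in>UNIV. cv$i) = 0"
  proof -
    have "(\<Sum>i\<in>UNIV. cv$i) = (\<Sum>i\<in>UNIV. \<Sum>k\<in>UNIV. L$k$i * Mt$k$i)"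
      unfolding cv_def vec_lambda_beta by (rule sum.swap)
    also have "\<dots> = (\<Sum>i\<in>UNIV. \<Sum>k\<in>UNIV. - (L$i$k * Mt$i$k))"
    proof (intro sum.cong refl)
      fix i k
      show "L$k$i * Mt$k$i = - (L$i$k * Mt$i$k)" using ls[of k i] sk[of i k] by simp
    qed
    also have "\<dots> = - (\<Sum>i\<in>UNIV. cv$i)"
      unfolding cv_def by (simp add: sum_negf)
    finally show ?thesis by simp
  qed
  have colsum: "(\<Sum>i\<in>UNIV. B$i$j) = real CARD('n)" for j
  proof -
    have "(\<Sum>i\<in>UNIV. B$i$j) = (\<Sum>i\<in>UNIV. (if i = j then (\<Sum>k\<in>UNIV. L$i$k) else 0)) + (\<Sum>i\<in>UNIV. 1 - L$i$j)"
      by (simp add: Bij sum.distrib add_diff_eq[symmetric])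
    also have "\<dots> = (\<Sum>k\<in>UNIV. L$j$k) + real CARD('n) - (\<Sum>i\<in>UNIV. L$i$j)"
      by (simp add: sum_subtractf)
    also have "\<dots> = real CARD('n)" by (simp add: ls)
    finally show ?thesis .
  qed
  have tsum: "(\<Sum>j\<in>UNIV. \<tau>$j) = 0"
  proof -
    have "0 = (\<Sum>i\<in>UNIV. (B *v \<tau>)$i)" using csum Bt by simp
    also have "\<dots> = (\<Sum>j\<in>UNIV. (\<Sum>i\<in>UNIV. B$i$j) * \<tau>$j)"
      unfolding matrix_vector_mult_def vec_lambda_beta sum_distrib_right by (rule sum.swap)
    also have "\<dots> = real CARD('n) * (\<Sum>j\<in>UNIV. \<tau>$j)"
      by (simp add: colsum sum_distrib_left)
    finally show ?thesis by simp
  qed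
  have normal: "(\<Sum>j\<in>UNIV. L$i$j * (Mt$i$j - (\<tau>$i - \<tau>$j))) = 0" for i
  proof -
    have "cv$i = (B *v \<tau>)$i" using Bt by simp
    also have "\<dots> = (\<Sum>j\<in>UNIV. ((if i = j then (\<Sum>k\<in>UNIV. L$i$k) else 0) + 1 - L$i$j) * \<tau>$j)"
      by (simp add: matrix_vector_mult_def Bij)
    also have "\<dots> = (\<Sum>j\<in>UNIV. (if i = j then (\<Sum>k\<in>UNIV. L$i$k) * \<tau>$j else 0) + \<tau>$j - L$i$j * \<tau>$j)"
      by (intro sum.cong refl) (simp add: algebra_simps)
    also have "\<dots> = (\<Sum>k\<in>UNIV. L$i$k) * \<tau>$i + (\<Sum>j\<in>UNIV. \<tau>$j) - (\<Sum>j\<in>UNIV. L$i$j * \<tau>$j)"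
      by (simp add: sum.distrib sum_subtractf sum.delta sum.delta')
    finally have "cv$i = (\<Sum>k\<in>UNIV. L$i$k) * \<tau>$i - (\<Sum>j\<in>UNIV. L$i$j * \<tau>$j)"
      using tsum by simp
    thus ?thesis
      by (simp add: cv_def algebra_simps sum.distrib sum_subtractf sum_distrib_right sum_distrib_left)
  qed
  have Mst: "Mstar$i$j = \<tau>$i - \<tau>$j" for i j
  proof -
    have "(A ** Mw ** ones_mat)$i$j = (\<Sum>k\<in>UNIV. \<Sum>l\<in>UNIV. A$i$l * Mw$l$k)"
      by (simp add: matrix_matrix_mult_def ones_mat_def)
    also have "\<dots> = (\<Sum>l\<in>UNIV. A$i$l * (\<Sum>k\<in>UNIV. Mw$l$k))"
      by (subst sum.swap) (simp add: sum_distrib_left)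
    also have "\<dots> = \<tau>$i"
      by (simp add: \<tau>_def cv_def Mw_def matrix_vector_mult_def hadamard_def)
    finally have 1: "(A ** Mw ** ones_mat)$i$j = \<tau>$i" .
    have "(ones_mat ** Mw ** A)$i$j = (\<Sum>l\<in>UNIV. \<Sum>k\<in>UNIV. Mw$k$l * A$l$j)"
      by (simp add: matrix_matrix_mult_def ones_mat_def sum_distrib_right)
    also have "\<dots> = (\<Sum>l\<in>UNIV. \<Sum>k\<in>UNIV. - (A$j$l * (L$l$k * Mt$l$k)))"
    proof (intro sum.cong refl)
      fix l k
      have "Mw$k$l = -(L$l$k*Mt$l$k)" using ls[of k l] sk[of l k] by (simp add: Mw_def hadamard_def)
      thus "Mw$k$l * A$l$j = - (A$j$l * (L$l$k * Mt$l$k))" using As[of l j] by (simp add: algebra_simps)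
    qed
    also have "\<dots> = - \<tau>$j"
      by (simp add: \<tau>_def cv_def matrix_vector_mult_def sum_negf sum_distrib_left)
    finally show ?thesis using 1 by (simp add: Mstar_def)
  qed
  have fro: "(frob_norm (hadamard L X))\<^sup>2 = (\<Sum>i\<in>UNIV. \<Sum>j\<in>UNIV. L$i$j * (X$i$j)\<^sup>2)" for X
  proof -
    have "(\<Sum>i\<in>UNIV. \<Sum>j\<in>UNIV. ((hadamard L X)$i$j)\<^sup>2) = (\<Sum>i\<in>UNIV. \<Sum>j\<in>UNIV. L$i$j * (X$i$j)\<^sup>2)"
    proof (intro sum.cong refl)
      fix i j
      have "(L$i$j)\<^sup>2 = L$i$j" using l2[of i j] by (simp add: power2_eq_square)
      thus "((hadamard L X)$i$j)\<^sup>2 = L$i$j * (X$i$j)\<^sup>2"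
        by (simp add: hadamard_def power_mult_distrib)
    qed
    moreover have "0 \<le> (\<Sum>i\<in>UNIV. \<Sum>j\<in>UNIV. ((hadamard L X)$i$j)\<^sup>2)"
      by (intro sum_nonneg) auto
    ultimately show ?thesis unfolding frob_norm_def by simp
  qed
  have opt: "(frob_norm (hadamard L (Mt - Mstar)))\<^sup>2 \<le> (frob_norm (hadamard L (Mt - M)))\<^sup>2"
    if Mmem: "M \<in> tdoa_matrices" for M
  proof -
    obtain s :: "real^'n" where s: "\<forall>i j. M$i$j = s$i - s$j"
      using Mmem unfolding tdoa_matrices_def by auto
    define d where "d i = s$i - \<tau>$i" for i
    define R where "R i j = Mt$i$j - (\<tau>$i - \<tau>$j)" for i j
    have Rsk: "R j i = - R i j" for i j by (simp add: R_def sk[of i j])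
    have eqM: "Mt$i$j - M$i$j = R i j - (d i - d j)" for i j
      by (simp add: s R_def d_def)
    have eqS: "Mt$i$j - Mstar$i$j = R i j" for i j
      by (simp add: Mst R_def)
    have cross: "(\<Sum>i\<in>UNIV. \<Sum>j\<in>UNIV. L$i$j * R i j * (d i - d j)) = 0"
    proof -
      have "(\<Sum>i\<in>UNIV. \<Sum>j\<in>UNIV. L$i$j * R i j * d j) = (\<Sum>i\<in>UNIV. \<Sum>j\<in>UNIV. L$j$i * R j i * d i)"
        by (rule sum.swap)
      also have "\<dots> = (\<Sum>i\<in>UNIV. \<Sum>j\<in>UNIV. - (L$i$j * R i j * d i))"
      proof (intro sum.cong refl)
        fix i j
        show "L$j$i * R j i * d i = - (L$i$j * R i j * d i)" using ls[of j i] Rsk[of i j] by simp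
      qed
      also have "\<dots> = - (\<Sum>i\<in>UNIV. \<Sum>j\<in>UNIV. L$i$j * R i j * d i)"
        by (simp add: sum_negf)
      finally have e: "(\<Sum>i\<in>UNIV. \<Sum>j\<in>UNIV. L$i$j * R i j * d j) = - (\<Sum>i\<in>UNIV. \<Sum>j\<in>UNIV. L$i$j * R i j * d i)" .
      have z: "(\<Sum>i\<in>UNIV. \<Sum>j\<in>UNIV. L$i$j * R i j * d i) = 0"
      proof -
        have "(\<Sum>i\<in>UNIV. \<Sum>j\<in>UNIV. L$i$j * R i j * d i) = (\<Sum>i\<in>UNIV. d i * (\<Sum>j\<in>UNIV. L$i$j * R i j))"
          by (simp add: sum_distrib_left mult.commute mult.left_commute)
        also have "\<dots> = 0" using normal by (simp add: R_def)
        finally show ?thesis .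
      qed
      have "(\<Sum>i\<in>UNIV. \<Sum>j\<in>UNIV. L$i$j * R i j * (d i - d j)) =
            (\<Sum>i\<in>UNIV. \<Sum>j\<in>UNIV. L$i$j * R i j * d i) - (\<Sum>i\<in>UNIV. \<Sum>j\<in>UNIV. L$i$j * R i j * d j)"
        by (simp add: right_diff_distrib sum_subtractf)
      thus ?thesis using e z by simp
    qed
    have "(\<Sum>i\<in>UNIV. \<Sum>j\<in>UNIV. L$i$j * (R i j - (d i - d j))\<^sup>2) =
          (\<Sum>i\<in>UNIV. \<Sum>j\<in>UNIV. L$i$j * (R i j)\<^sup>2) - 2 * (\<Sum>i\<in>UNIV. \<Sum>j\<in>UNIV. L$i$j * R i j * (d i - d j))
           + (\<Sum>i\<in>UNIV. \<Sum>j\<in>UNIV. L$i$j * (d i - d j)\<^sup>2)"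
      (is "?l = ?r")
    proof -
      have "?l = (\<Sum>i\<in>UNIV. \<Sum>j\<in>UNIV. L$i$j * (R i j)\<^sup>2 - 2 * (L$i$j * R i j * (d i - d j)) + L$i$j * (d i - d j)\<^sup>2)"
        by (intro sum.cong refl) (simp add: power2_eq_square algebra_simps)
      also have "\<dots> = ?r"
        by (simp only: sum.distrib sum_subtractf sum_distrib_left)
      finally show ?thesis .
    qed
    moreover have "0 \<le> (\<Sum>i\<in>UNIV. \<Sum>j\<in>UNIV. L$i$j * (d i - d j)\<^sup>2)"
      using L_01 by (intro sum_nonneg) (metis mult_nonneg_nonneg order_refl zero_le_one zero_le_power2)
    ultimately show ?thesis using cross by (simp add: fro eqM eqS)
  qed
  have mem: "Mstar \<in> tdoa_matrices"
    unfolding tdoa_matrices_def using Mst by blast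
  show ?thesis
    unfolding Let_def using mem opt
    by (simp add: Mstar_def A_def Mw_def B_def)
qed

end
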